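(* Let $\sigma>0$, $\zeta_*\in[0,1]$, $\gamma_*>0$, and $\nu_*=(1-\zeta_* )\delta_0+\zeta_*\delta_{\gamma_*}$. Let $S(0,0)$ be the set of probability distributions $\nu$ on $\mathbb{R}$ with $\nu((0,\infty))=0$. Then \[ \inf_{\nu\in S(0,0)}\|F_\nu-F_{\nu_*}\|_\infty\ \ge\ \zeta_*\left(\Phi_\sigma(\tfrac12\gamma_* )-\Phi_\sigma(-\tfrac12\gamma_* )\right), \] where $\Phi_\sigma$ is the CDF of $\mathcal{N}(0,\sigma^2)$. Furthermore, if $\gamma_*<\sigma$, then \[ \inf_{\nu\in S(0,0)}\|F_\nu-F_{\nu_*}\|_\infty\ \ge\ \frac{23\zeta_*\gamma_*}{24\sigma\sqrt{2\pi}}. \]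
   Context: $\delta_x$ denotes the point mass at $x$. For a probability distribution $\nu$ on $\mathbb{R}$, $F_\nu(t):=\mathbb{P}_{\mu\sim\nu,\,X\sim\mathcal{N}(\mu,\sigma^2)}(X\le t)$, and $\|\cdot\|_\infty$ is the sup norm over $t\in\mathbb{R}$. *)

theory Defs
  imports "HOL-Probability.Probability"
begin

definition Phi :: "real \<Rightarrow> real \<Rightarrow> real" where
  "Phi \<sigma> x = measure (density lborel (normal_density 0 \<sigma>)) {..x}"

text \<open>CDF of the Gaussian location mixture: P(X \<le> t), mu ~ nu, X ~ N(mu, sigma^2).\<close>
definition mixcdf :: "real \<Rightarrow> real measure \<Rightarrow> real \<Rightarrow> real" where
  "mixcdf \<sigma> \<nu> t = (\<integral>\<mu>. Phi \<sigma> (t - \<mu>) \<partial>\<nu>)"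

definition supdist :: "real \<Rightarrow> real measure \<Rightarrow> real measure \<Rightarrow> real" where
  "supdist \<sigma> \<nu> \<nu>' = (SUP t. \<bar>mixcdf \<sigma> \<nu> t - mixcdf \<sigma> \<nu>' t\<bar>)"

definition real_distr :: "real measure \<Rightarrow> bool" where
  "real_distr \<nu> \<longleftrightarrow> prob_space \<nu> \<and> sets \<nu> = sets borel"

definition S00 :: "real measure set" where
  "S00 = {\<nu>. real_distr \<nu> \<and> measure \<nu> {0<..} = 0}"

text \<open>nu_* = (1 - zeta) delta_0 + zeta delta_gamma.\<close>
definition two_point :: "real \<Rightarrow> real \<Rightarrow> real measure" where
  "two_point \<zeta> \<gamma> = measure_pmf (map_pmf (\<lambda>b. if b then \<gamma> else 0) (bernoulli_pmf \<zeta>))"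

end

theory Submission
  imports Defs
begin


lemma Phi_basic:
  assumes "\<sigma> > 0"
  shows "0 \<le> Phi \<sigma> x" "Phi \<sigma> x \<le> 1"
proof -
  interpret prob_space "density lborel (normal_density 0 \<sigma>)"
    using prob_space_normal_density assms by blast
  show "0 \<le> Phi \<sigma> x" "Phi \<sigma> x \<le> 1" unfolding Phi_def by (auto intro: prob_le_1)
qed

lemma Phi_diff:
  assumes "\<sigma> > 0" "a \<le> b"
  shows "Phi \<sigma> b - Phi \<sigma> a = (\<integral>x. normal_density 0 \<sigma> x * indicator {a<..b} x \<partial>lborel)"
proof -
  let ?D = "density lborel (normal_density 0 \<sigma>)"
  interpret prob_space ?D
    using prob_space_normal_density assms by blast
  have "Phi \<sigma> b - Phi \<sigma> a = measure ?D ({..b} - {..a})"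
    unfolding Phi_def using assms by (subst finite_measure_Diff) auto
  also have "{..b} - {..a} = {a<..b}" by auto
  also have "measure ?D {a<..b} = integral\<^sup>L ?D (indicator {a<..b})" by simp
  also have "\<dots> = (\<integral>x. normal_density 0 \<sigma> x *\<^sub>R indicator {a<..b} x \<partial>lborel)"
    by (rule integral_density) (auto simp: normal_density_nonneg)
  finally show ?thesis by simp
qed

lemma Phi_mono:
  assumes "\<sigma> > 0" "a \<le> b"
  shows "Phi \<sigma> a \<le> Phi \<sigma> b"
proof -
  have "0 \<le> (\<integral>x. normal_density 0 \<sigma> x * indicator {a<..b} x \<partial>lborel)"
    by (rule integral_nonneg_AE) (auto simp: normal_density_nonneg)
  then show ?thesis using Phi_diff[OF assms] by linarith
qed

lemma Phi_lower:
  assumes "\<sigma> > 0" "0 < \<gamma>" "\<gamma> < \<sigma>"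
  shows "Phi \<sigma> (\<gamma>/2) - Phi \<sigma> (-\<gamma>/2) \<ge> 23 * \<gamma> / (24 * \<sigma> * sqrt (2 * pi))"
proof -
  define a where "a = -\<gamma>/2"
  define b where "b = \<gamma>/2"
  define c where "c = 1 / sqrt (2 * pi * \<sigma>\<^sup>2)"
  define g where "g x = c * (1 - x\<^sup>2 / (2 * \<sigma>\<^sup>2))" for x
  define G where "G x = c * (x - x^3 / (6 * \<sigma>\<^sup>2))" for x
  have ab: "a \<le> b" using assms unfolding a_def b_def by simp
  have c0: "c > 0" unfolding c_def using assms by simp
  have gle: "g x \<le> normal_density 0 \<sigma> x" for x
  proof -
    have "1 - x\<^sup>2 / (2 * \<sigma>\<^sup>2) \<le> exp (-(x - 0)\<^sup>2/ (2 * \<sigma>\<^sup>2))"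
      using exp_ge_add_one_self[of "-(x - 0)\<^sup>2/ (2 * \<sigma>\<^sup>2)"] by simp
    then show ?thesis unfolding g_def normal_density_def c_def[symmetric]
      using c0 by (simp add: mult_left_mono)
  qed
  have deriv: "(G has_vector_derivative g x) (at x within {a..b})" for x
    unfolding G_def g_def has_real_derivative_iff_has_vector_derivative[symmetric]
    using assms
    by (auto intro!: derivative_eq_intros simp: field_simps power2_eq_square)
  have FTC: "(\<integral>x. indicator {a..b} x *\<^sub>R g x \<partial>lborel) = G b - G a"
    using assms by (intro integral_FTC_atLeastAtMost[OF ab deriv]) (auto simp: g_def intro!: continuous_intros)
  have int1: "integrable lborel (\<lambda>x. indicator {a..b} x *\<^sub>R g x)"
  proof -
    have "isCont g x" for x unfolding g_def using assms by (intro continuous_intros) auto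
    then show ?thesis using borel_integrable_atLeastAtMost[of a b g]
      by (simp add: mult.commute)
  qed
  have int2: "integrable lborel (\<lambda>x. normal_density 0 \<sigma> x * indicator {a<..b} x)"
    using assms by (intro integrable_real_mult_indicator integrable_normal_density) auto
  have "G b - G a \<le> (\<integral>x. normal_density 0 \<sigma> x * indicator {a<..b} x \<partial>lborel)"
    unfolding FTC[symmetric]
  proof (rule integral_mono_AE[OF int1 int2])
    show "AE x in lborel. indicator {a..b} x *\<^sub>R g x \<le> normal_density 0 \<sigma> x * indicator {a<..b} x"
      using AE_lborel_singleton[of a]
    proof eventually_elim
      case (elim x) then show ?case using gle[of x] by (auto split: split_indicator)
    qed
  qed
  also have "\<dots> = Phi \<sigma> b - Phi \<sigma> a" using Phi_diff[OF assms(1) ab] by simp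
  finally have 1: "G b - G a \<le> Phi \<sigma> b - Phi \<sigma> a" .
  have Gd: "G b - G a = c * (\<gamma> - \<gamma>^3 / (24 * \<sigma>\<^sup>2))"
    unfolding G_def a_def b_def by (simp add: field_simps power3_eq_cube)
  have q: "\<gamma>^3 / (24 * \<sigma>\<^sup>2) \<le> \<gamma> / 24"
  proof -
    have "\<gamma>^3 \<le> \<gamma> * \<sigma>\<^sup>2" using assms
      by (simp add: power3_eq_cube power2_eq_square mult_strict_mono less_imp_le mult_mono)
    then show ?thesis using assms by (simp add: field_simps)
  qed
  have q2: "23 * \<gamma> / 24 \<le> \<gamma> - \<gamma>^3 / (24 * \<sigma>\<^sup>2)" using q by linarith
  have cdef: "c = 1 / (\<sigma> * sqrt (2 * pi))"
    unfolding c_def using assms by (simp add: real_sqrt_mult)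
  have "c * (23 * \<gamma> / 24) \<le> G b - G a"
    unfolding Gd using c0 q2 by (intro mult_left_mono) auto
  moreover have "c * (23 * \<gamma> / 24) = 23 * \<gamma> / (24 * \<sigma> * sqrt (2 * pi))"
    unfolding cdef by simp
  ultimately have "G b - G a \<ge> 23 * \<gamma> / (24 * \<sigma> * sqrt (2 * pi))" by simp
  with 1 show ?thesis unfolding a_def b_def by simp
qed


lemma Phi_meas: "\<sigma> > 0 \<Longrightarrow> Phi \<sigma> \<in> borel_measurable borel"
  by (rule borel_measurable_mono) (auto simp: mono_def Phi_mono)

lemma mix_props:
  assumes "\<sigma> > 0" "real_distr \<nu>"
  shows "integrable \<nu> (\<lambda>\<mu>. Phi \<sigma> (t - \<mu>))" "0 \<le> mixcdf \<sigma> \<nu> t" "mixcdf \<sigma> \<nu> t \<le> 1"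
proof -
  interpret prob_space \<nu> using assms(2) unfolding real_distr_def by auto
  have hs: "sets \<nu> = sets borel" using assms(2) unfolding real_distr_def by auto
  note m[measurable] = Phi_meas[OF assms(1)]
  have "(\<lambda>\<mu>. Phi \<sigma> (t - \<mu>)) \<in> borel_measurable borel" by measurable
  then have meas: "(\<lambda>\<mu>. Phi \<sigma> (t - \<mu>)) \<in> borel_measurable \<nu>"
    using measurable_cong_sets[OF hs refl] by blast
  show int: "integrable \<nu> (\<lambda>\<mu>. Phi \<sigma> (t - \<mu>))"
    by (rule integrable_const_bound[where B=1]) (auto simp: meas Phi_basic[OF assms(1)])
  show "0 \<le> mixcdf \<sigma> \<nu> t" unfolding mixcdf_def
    by (rule integral_nonneg_AE) (auto simp: Phi_basic[OF assms(1)])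
  have "mixcdf \<sigma> \<nu> t \<le> (\<integral>\<mu>. 1 \<partial>\<nu>)" unfolding mixcdf_def
    by (rule integral_mono[OF int]) (auto simp: Phi_basic[OF assms(1)])
  then show "mixcdf \<sigma> \<nu> t \<le> 1" by (simp add: prob_space)
qed

lemma mix_ge:
  assumes "\<sigma> > 0" "\<nu> \<in> S00"
  shows "Phi \<sigma> t \<le> mixcdf \<sigma> \<nu> t"
proof -
  have rd: "real_distr \<nu>" and z: "measure \<nu> {0<..} = 0" using assms(2) unfolding S00_def by auto
  interpret prob_space \<nu> using rd unfolding real_distr_def by auto
  have hs: "sets \<nu> = sets borel" using rd unfolding real_distr_def by auto
  have ns: "{0<..} \<in> null_sets \<nu>"
    using z hs by (auto simp: emeasure_eq_measure null_sets_def)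
  have ae: "AE \<mu> in \<nu>. \<mu> \<le> 0"
    by (rule AE_I'[OF ns]) auto
  have "(\<integral>\<mu>. Phi \<sigma> t \<partial>\<nu>) \<le> mixcdf \<sigma> \<nu> t" unfolding mixcdf_def
  proof (rule integral_mono_AE[OF _ mix_props(1)[OF assms(1) rd]])
    show "AE \<mu> in \<nu>. Phi \<sigma> t \<le> Phi \<sigma> (t - \<mu>)"
      using ae by eventually_elim (rule Phi_mono[OF assms(1)], simp)
  qed simp
  then show ?thesis by (simp add: prob_space)
qed

lemma two_point_mix:
  assumes "0 \<le> \<zeta>" "\<zeta> \<le> 1"
  shows "mixcdf \<sigma> (two_point \<zeta> \<gamma>) t = Phi \<sigma> (t - \<gamma>) * \<zeta> + Phi \<sigma> t * (1 - \<zeta>)"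
  unfolding mixcdf_def two_point_def using assms by simp


theorem lemma2:
  fixes \<sigma> \<zeta> \<gamma> :: real
  assumes "\<sigma> > 0" and "0 \<le> \<zeta>" and "\<zeta> \<le> 1" and "\<gamma> > 0"
  shows "(INF \<nu>\<in>S00. supdist \<sigma> \<nu> (two_point \<zeta> \<gamma>))
           \<ge> \<zeta> * (Phi \<sigma> (\<gamma> / 2) - Phi \<sigma> (- \<gamma> / 2))
         \<and> (\<gamma> < \<sigma> \<longrightarrow> (INF \<nu>\<in>S00. supdist \<sigma> \<nu> (two_point \<zeta> \<gamma>))
           \<ge> 23 * \<zeta> * \<gamma> / (24 * \<sigma> * sqrt (2 * pi)))"
proof -
  let ?L = "\<zeta> * (Phi \<sigma> (\<gamma> / 2) - Phi \<sigma> (- \<gamma> / 2))"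
  have ne: "S00 \<noteq> {}"
  proof -
    have "return borel (0::real) \<in> S00"
      unfolding S00_def real_distr_def
      by (auto simp: prob_space_return measure_return)
    then show ?thesis by blast
  qed
  have tp_bd: "0 \<le> mixcdf \<sigma> (two_point \<zeta> \<gamma>) t \<and> mixcdf \<sigma> (two_point \<zeta> \<gamma>) t \<le> 1" for t
  proof -
    have "0 \<le> Phi \<sigma> (t - \<gamma>) * \<zeta> + Phi \<sigma> t * (1 - \<zeta>)"
      using assms Phi_basic[OF assms(1)] by simp
    moreover have "Phi \<sigma> (t - \<gamma>) * \<zeta> + Phi \<sigma> t * (1 - \<zeta>) \<le> 1 * \<zeta> + 1 * (1 - \<zeta>)"
      using assms Phi_basic[OF assms(1)] by (intro add_mono mult_right_mono) auto
    ultimately show ?thesis using two_point_mix[OF assms(2,3)] by simp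
  qed
  have main: "?L \<le> supdist \<sigma> \<nu> (two_point \<zeta> \<gamma>)" if "\<nu> \<in> S00" for \<nu>
  proof -
    have rd: "real_distr \<nu>" using that unfolding S00_def by auto
    have bdd: "bdd_above (range (\<lambda>t. \<bar>mixcdf \<sigma> \<nu> t - mixcdf \<sigma> (two_point \<zeta> \<gamma>) t\<bar>))"
    proof -
      have "\<bar>mixcdf \<sigma> \<nu> t - mixcdf \<sigma> (two_point \<zeta> \<gamma>) t\<bar> \<le> 2" for t
        using tp_bd[of t] mix_props(2,3)[OF assms(1) rd, of t] by linarith
      then show ?thesis unfolding bdd_above_def by blast
    qed
    have "?L = Phi \<sigma> (\<gamma>/2) - (Phi \<sigma> (\<gamma>/2 - \<gamma>) * \<zeta> + Phi \<sigma> (\<gamma>/2) * (1 - \<zeta>))"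
      by (simp add: algebra_simps)
    also have "\<dots> \<le> mixcdf \<sigma> \<nu> (\<gamma>/2) - mixcdf \<sigma> (two_point \<zeta> \<gamma>) (\<gamma>/2)"
      using mix_ge[OF assms(1) that, of "\<gamma>/2"] two_point_mix[OF assms(2,3)] by simp
    also have "\<dots> \<le> \<bar>mixcdf \<sigma> \<nu> (\<gamma>/2) - mixcdf \<sigma> (two_point \<zeta> \<gamma>) (\<gamma>/2)\<bar>" by simp
    also have "\<dots> \<le> supdist \<sigma> \<nu> (two_point \<zeta> \<gamma>)"
      unfolding supdist_def by (rule cSUP_upper[OF _ bdd]) simp
    finally show ?thesis .
  qed
  have 1: "?L \<le> (INF \<nu>\<in>S00. supdist \<sigma> \<nu> (two_point \<zeta> \<gamma>))"
    by (rule cINF_greatest[OF ne main])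
  moreover have "23 * \<zeta> * \<gamma> / (24 * \<sigma> * sqrt (2 * pi)) \<le> ?L" if "\<gamma> < \<sigma>"
  proof -
    have "\<zeta> * (23 * \<gamma> / (24 * \<sigma> * sqrt (2 * pi))) \<le> ?L"
      using Phi_lower[OF assms(1) assms(4) that] assms(2) by (intro mult_left_mono) auto
    then show ?thesis by simp
  qed
  ultimately show ?thesis by auto
qed

end
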